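(* Let $\mu=\mu_\beta$ be a central state of a model in the class described in the context, and let $\beta_0>0$ and $p_1^0(\beta,u,U,d)>0$ be such that for $\beta>\beta_0$ and $p_1(\mu)<p_1^0$ one has $\mu\otimes\mu(\{(\omega,\omega'):\pi(\cdot\mid\omega)\perp\pi(\cdot\mid\omega')\})=1$ (such constants exist). Then for such $\beta$ and $\mu$, the extremal decomposition measure $\alpha_\mu$ of $\mu$ has no atoms: $\alpha_\mu(\{\nu\})=0$ for every $\nu\in{\rm ex}\,\mathcal G(\gamma)$. In particular uncountably many extremal Gibbs measures enter the extremal decomposition of $\mu$.
   Context: Let $d\ge 2$, $\mathcal T^d=(V,E)$ the Cayley tree in which every vertex has $d+1$ neighbours, $q\ge2$, $\Omega=\mathbb Z_q^V$ with product $\sigma$-algebra $\mathcal F$. Model: formal Hamiltonian $H(\omega)=\sum_{\{v,w\}\in E}u_{\omega_v,\omega_w}+\sum_v\Psi(\omega_v)$, $(u_{i,j})$ symmetric, $u_{i,i}=0$, $0<u:=\min_{i\neq j}u_{i,j}\le\max u_{i,j}=:U$, $\|\Psi\|_\infty\le u(d-1)/8$. Gibbs specification $\gamma$: $\gamma_\Lambda(\omega_\Lambda\mid\omega_{\Lambda^c})=(Z^\omega_\Lambda)^{-1}\prod_{\{v,w\}\cap\Lambda\neq\emptyset}Q(\omega_v,\omega_w)$, $Q(i,j)=e^{-\beta(u_{i,j}+(\Psi(i)+\Psi(j))/(d+1))}$. $\mathcal G(\gamma)$ is the convex set of Gibbs measures (solutions of the DLR equations), ${\rm ex}\,\mathcal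 G(\gamma)$ its extreme points, equipped with the evaluation $\sigma$-algebra (generated by $\nu\mapsto\nu(A)$, $A\in\mathcal F$). Central state: let $Q_0(i,j)=g(i-j)$, $g$ even strictly positive, $\sum_jg(j)=1$, no eigenvalue of $Q_0$ equal to $1/d$; for $Q$ near $Q_0$ there is a $C^1$ solution $\bar x(Q)>0$ of $x(i)=\sum_jQ(i,j)x(j)^d$ with $\bar x(Q_0)\equiv1$. If the model's transfer matrix is a positive multiple of such $Q$, the central state is the Gibbs measure which is the homogeneous tree-indexed Markov chain with marginal $\propto\bar x^{d+1}$ and transition matrix $P(i,j)=Q(i,j)\bar x(j)^d/\sum_kQ(i,k)\bar x(k)^d$. $p_1(\mu)=\max_i\sum_{j\neq i}P(i,j)$. $\pi(\cdot\mid\omega)=\lim_{\Lambda\uparrow V}\gamma_\Lambda(\cdot\mid\omega)$ if the limit exists for all cylinder events, a fixed arbitrary probability measure otherwise; for $\mu$-a.e. $\omega$ it is an extremal Gibbs measure. The extremal decomposition measure is $\alpha_\mu(M)=\mu(\{\omega:\pi(\cdot\mid\omega)\in M\})$ for measurable $M\subset{\rm ex}\,\mathcal G(\gamma)$, so that $\mu=\int\nu\,\alpha_\mu(d\nu)$. *)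

theory Defs
  imports "HOL-Probability.Probability" "HOL-Analysis.Analysis"
begin

text \<open>Vertices: reduced words over the letters 0..d (no two equal consecutive letters),
  i.e. the Cayley graph of the free product of d+1 copies of Z_2.  Each unordered edge is
  represented once, as a pair (parent, child) with parent = tl child.\<close>

definition tree_V :: "nat \<Rightarrow> nat list set" where
  "tree_V d = {xs. set xs \<subseteq> {..d} \<and> (\<forall>i. Suc i < length xs \<longrightarrow> xs ! i \<noteq> xs ! Suc i)}"

definition tree_E :: "nat \<Rightarrow> (nat list \<times> nat list) set" where
  "tree_E d = {(v, w). w \<in> tree_V d \<and> w \<noteq> [] \<and> v = tl w}"

definition tree_ball :: "nat \<Rightarrow> nat \<Rightarrow> nat list set" where
  "tree_ball d n = {v \<in> tree_V d. length v \<le> n}"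

text \<open>The spin space Z_q is represented by a finite type 's with CARD('s) = q.\<close>

definition Omega :: "nat \<Rightarrow> (nat list \<Rightarrow> 's) measure" where
  "Omega d = PiM (tree_V d) (\<lambda>_. count_space UNIV)"

definition transfer :: "real \<Rightarrow> ('s::finite \<Rightarrow> 's \<Rightarrow> real) \<Rightarrow> ('s \<Rightarrow> real) \<Rightarrow> nat \<Rightarrow> real^'s^'s" where
  "transfer \<beta> u \<Psi> d = (\<chi> i j. exp (- \<beta> * (u i j + (\<Psi> i + \<Psi> j) / (real d + 1))))"

definition conf_merge :: "nat list set \<Rightarrow> (nat list \<Rightarrow> 's) \<Rightarrow> (nat list \<Rightarrow> 's) \<Rightarrow> nat list \<Rightarrow> 's" where
  "conf_merge \<Lambda> \<sigma> \<omega> = (\<lambda>v. if v \<in> \<Lambda> then \<sigma> v else \<omega> v)"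

definition boltz_weight :: "nat \<Rightarrow> real^'s^'s \<Rightarrow> nat list set \<Rightarrow> (nat list \<Rightarrow> 's::finite) \<Rightarrow> real" where
  "boltz_weight d Q \<Lambda> \<eta> =
     (\<Prod>e\<in>{e \<in> tree_E d. fst e \<in> \<Lambda> \<or> snd e \<in> \<Lambda>}. Q $ \<eta> (fst e) $ \<eta> (snd e))"

definition gibbs_kernel :: "nat \<Rightarrow> real^'s^'s \<Rightarrow> nat list set \<Rightarrow> (nat list \<Rightarrow> 's::finite)
    \<Rightarrow> (nat list \<Rightarrow> 's) set \<Rightarrow> real" where
  "gibbs_kernel d Q \<Lambda> \<omega> A =
     (\<Sum>\<sigma>\<in>PiE \<Lambda> (\<lambda>_. UNIV). boltz_weight d Q \<Lambda> (conf_merge \<Lambda> \<sigma> \<omega>) * indicator A (conf_merge \<Lambda> \<sigma> \<omega>))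
     / (\<Sum>\<sigma>\<in>PiE \<Lambda> (\<lambda>_. UNIV). boltz_weight d Q \<Lambda> (conf_merge \<Lambda> \<sigma> \<omega>))"

definition gibbs_measures :: "nat \<Rightarrow> real^'s^'s \<Rightarrow> (nat list \<Rightarrow> 's::finite) measure set" where
  "gibbs_measures d Q = {\<mu>. sets \<mu> = sets (Omega d) \<and> prob_space \<mu> \<and>
     (\<forall>\<Lambda> A. finite \<Lambda> \<longrightarrow> \<Lambda> \<subseteq> tree_V d \<longrightarrow> A \<in> sets (Omega d) \<longrightarrow>
        measure \<mu> A = (\<integral>\<omega>. gibbs_kernel d Q \<Lambda> \<omega> A \<partial>\<mu>))}"

definition extremal_gibbs :: "nat \<Rightarrow> real^'s^'s \<Rightarrow> (nat list \<Rightarrow> 's::finite) measure set" where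
  "extremal_gibbs d Q = {\<nu> \<in> gibbs_measures d Q. \<forall>\<nu>1 \<nu>2 t.
     \<nu>1 \<in> gibbs_measures d Q \<longrightarrow> \<nu>2 \<in> gibbs_measures d Q \<longrightarrow> 0 < t \<longrightarrow> t < 1 \<longrightarrow>
     (\<forall>A\<in>sets (Omega d). measure \<nu> A = t * measure \<nu>1 A + (1 - t) * measure \<nu>2 A) \<longrightarrow> \<nu>1 = \<nu>2}"

definition cylinder_events :: "nat \<Rightarrow> (nat list \<Rightarrow> 's) set set" where
  "cylinder_events d = {{\<omega> \<in> space (Omega d). restrict \<omega> \<Delta> \<in> B} | \<Delta> B. finite \<Delta> \<and> \<Delta> \<subseteq> tree_V d}"

text \<open>The fixed arbitrary probability measure: a point mass.\<close>
definition default_state :: "nat \<Rightarrow> (nat list \<Rightarrow> 's) measure" where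
  "default_state d = return (Omega d) (\<lambda>v\<in>tree_V d. undefined)"

definition is_limit_state :: "nat \<Rightarrow> real^'s^'s \<Rightarrow> (nat list \<Rightarrow> 's::finite) \<Rightarrow> (nat list \<Rightarrow> 's) measure \<Rightarrow> bool" where
  "is_limit_state d Q \<omega> \<nu> \<longleftrightarrow> sets \<nu> = sets (Omega d) \<and> prob_space \<nu> \<and>
     (\<forall>A\<in>cylinder_events d.
        ((\<lambda>\<Lambda>. gibbs_kernel d Q \<Lambda> \<omega> A) \<longlongrightarrow> measure \<nu> A) (finite_subsets_at_top (tree_V d)))"

definition pi_state :: "nat \<Rightarrow> real^'s^'s \<Rightarrow> (nat list \<Rightarrow> 's::finite) \<Rightarrow> (nat list \<Rightarrow> 's) measure" where
  "pi_state d Q \<omega> = (if \<exists>\<nu>. is_limit_state d Q \<omega> \<nu> then (SOME \<nu>. is_limit_state d Q \<omega> \<nu>) else default_state d)"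

definition mutually_singular :: "nat \<Rightarrow> (nat list \<Rightarrow> 's) measure \<Rightarrow> (nat list \<Rightarrow> 's) measure \<Rightarrow> bool" where
  "mutually_singular d \<nu> \<nu>' \<longleftrightarrow>
     (\<exists>A\<in>sets (Omega d). measure \<nu> A = 0 \<and> measure \<nu>' (space (Omega d) - A) = 0)"

definition model_class :: "nat \<Rightarrow> ('s::finite \<Rightarrow> 's \<Rightarrow> real) \<Rightarrow> ('s \<Rightarrow> real) \<Rightarrow> bool" where
  "model_class d u \<Psi> \<longleftrightarrow> 2 \<le> d \<and> 2 \<le> CARD('s) \<and>
     (\<forall>i j. u i j = u j i) \<and> (\<forall>i. u i i = 0) \<and> (\<forall>i j. i \<noteq> j \<longrightarrow> 0 < u i j) \<and>
     (\<forall>i. \<bar>\<Psi> i\<bar> \<le> Min {u i j | i j. i \<noteq> j} * (real d - 1) / 8)"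

text \<open>Q0(i,j) = g(i - j) (difference in Z_q, via a bijection idx of the spin type onto {..<q});
  g even, strictly positive, summing to 1; 1/d is not an eigenvalue of Q0.\<close>
definition circulant_base :: "nat \<Rightarrow> ('s::finite \<Rightarrow> nat) \<Rightarrow> (nat \<Rightarrow> real) \<Rightarrow> real^'s^'s \<Rightarrow> bool" where
  "circulant_base d idx g Q0 \<longleftrightarrow> bij_betw idx UNIV {..<CARD('s)} \<and>
     (\<forall>k<CARD('s). 0 < g k \<and> g k = g ((CARD('s) - k) mod CARD('s))) \<and>
     (\<Sum>k<CARD('s). g k) = 1 \<and>
     Q0 = (\<chi> i j. g ((idx i + CARD('s) - idx j) mod CARD('s))) \<and>
     (\<forall>x::real^'s. Q0 *v x = (1 / real d) *\<^sub>R x \<longrightarrow> x = 0)"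

definition central_branch :: "nat \<Rightarrow> real^'s^'s \<Rightarrow> (real^'s^'s \<Rightarrow> real^'s) \<Rightarrow> (real^'s^'s) set \<Rightarrow> bool" where
  "central_branch d Q0 xbar N \<longleftrightarrow> open N \<and> Q0 \<in> N \<and> xbar Q0 = (\<chi> i. 1) \<and>
     (\<forall>Q\<in>N. \<forall>i. 0 < xbar Q $ i \<and> xbar Q $ i = (\<Sum>j\<in>UNIV. Q $ i $ j * (xbar Q $ j) ^ d)) \<and>
     (\<exists>D. (\<forall>Q\<in>N. (xbar has_derivative blinfun_apply (D Q)) (at Q)) \<and> continuous_on N D)"

text \<open>mu is the central state of the model with transfer matrix Qm: a Gibbs measure, Qm = c Q' with
  c > 0 and Q' in N, and mu is the homogeneous tree-indexed Markov chain with marginal proportional to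
  xbar(Q')^(d+1) and transition matrix P (described through its finite-dimensional distributions on
  the balls around the root []).\<close>
definition central_state :: "nat \<Rightarrow> (real^'s^'s \<Rightarrow> real^'s) \<Rightarrow> (real^'s^'s) set \<Rightarrow> real^'s^'s
    \<Rightarrow> (nat list \<Rightarrow> 's::finite) measure \<Rightarrow> bool" where
  "central_state d xbar N Qm \<mu> \<longleftrightarrow> \<mu> \<in> gibbs_measures d Qm \<and>
     (\<exists>c Q'. 0 < c \<and> Q' \<in> N \<and> Qm = c *\<^sub>R Q' \<and>
       (let x = xbar Q';
            m = (\<lambda>i. x $ i ^ (d + 1) / (\<Sum>k\<in>UNIV. x $ k ^ (d + 1)));
            P = (\<lambda>i j. Q' $ i $ j * x $ j ^ d / (\<Sum>k\<in>UNIV. Q' $ i $ k * x $ k ^ d))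
        in \<forall>n (\<sigma>::nat list \<Rightarrow> 's).
             measure \<mu> {\<omega> \<in> space (Omega d). \<forall>v\<in>tree_ball d n. \<omega> v = \<sigma> v}
             = m (\<sigma> []) * (\<Prod>e\<in>{e \<in> tree_E d. snd e \<in> tree_ball d n}. P (\<sigma> (fst e)) (\<sigma> (snd e)))))"

definition root_trans :: "(nat list \<Rightarrow> 's) measure \<Rightarrow> 's \<Rightarrow> 's \<Rightarrow> real" where
  "root_trans \<mu> i j = measure \<mu> {\<omega> \<in> space \<mu>. \<omega> [] = i \<and> \<omega> [0] = j} / measure \<mu> {\<omega> \<in> space \<mu>. \<omega> [] = i}"

definition p1 :: "(nat list \<Rightarrow> 's::finite) measure \<Rightarrow> real" where
  "p1 \<mu> = Max (range (\<lambda>i. \<Sum>j\<in>UNIV - {i}. root_trans \<mu> i j))"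

end

theory Submission
  imports Defs
begin

lemma space_Omega: "space (Omega d) = PiE (tree_V d) (\<lambda>_. UNIV)"
  by (simp add: Omega_def space_PiM)

lemma coord_meas: "(\<lambda>\<omega>. \<omega> v) \<in> measurable (Omega d) (count_space UNIV)"
proof (cases "v \<in> tree_V d")
  case True then show ?thesis unfolding Omega_def by (rule measurable_component_singleton)
next
  case False
  have "(\<lambda>\<omega>. undefined) \<in> measurable (Omega d) (count_space UNIV)" by simp
  then show ?thesis
    by (rule measurable_cong[THEN iffD1, rotated]) (use False in \<open>auto simp: space_Omega PiE_def extensional_def\<close>)
qed

lemma merge_coord_meas: "(\<lambda>\<omega>. conf_merge Y \<sigma> \<omega> v) \<in> measurable (Omega d) (count_space UNIV)"
  by (cases "v \<in> Y") (auto simp: conf_merge_def coord_meas)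

lemma merge_space: "finite Y \<Longrightarrow> Y \<subseteq> tree_V d \<Longrightarrow> \<sigma> \<in> PiE Y (\<lambda>_. UNIV) \<Longrightarrow> \<omega> \<in> space (Omega d)
  \<Longrightarrow> conf_merge Y \<sigma> \<omega> \<in> space (Omega d)"
  by (auto simp: space_Omega conf_merge_def PiE_def extensional_def)

lemma merge_meas: assumes "finite Y" "Y \<subseteq> tree_V d" "\<sigma> \<in> PiE Y (\<lambda>_. UNIV)"
  shows "conf_merge Y \<sigma> \<in> measurable (Omega d) (Omega d)"
proof -
  have "(\<lambda>\<omega> v. conf_merge Y \<sigma> \<omega> v) \<in> measurable (Omega d) (PiM (tree_V d) (\<lambda>_. count_space UNIV))"
    by (rule measurable_PiM_single') (use merge_space[OF assms] in \<open>auto simp: merge_coord_meas space_Omega\<close>)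
  then show ?thesis by (simp add: Omega_def)
qed

lemma Qmeas: fixes Q :: "real^'s::finite^'s"
  assumes f: "f \<in> measurable M (count_space UNIV)" and g: "g \<in> measurable M (count_space UNIV)"
  shows "(\<lambda>x. Q $ f x $ g x) \<in> borel_measurable M"
proof -
  have "(\<lambda>x. (\<lambda>i x. Q $ i $ g x) (f x) x) \<in> borel_measurable M"
  proof (rule measurable_compose_countable[OF _ f])
    fix i
    show "(\<lambda>x. Q $ i $ g x) \<in> borel_measurable M"
      by (rule measurable_compose_countable[where f="\<lambda>j x. Q $ i $ j", OF _ g]) simp
  qed
  then show ?thesis by simp
qed

lemma bw_meas: fixes Q :: "real^'s::finite^'s"
  shows "(\<lambda>\<omega>. boltz_weight d Q \<Lambda> (conf_merge Y \<sigma> \<omega>)) \<in> borel_measurable (Omega d)"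
  unfolding boltz_weight_def
  by (intro borel_measurable_prod Qmeas merge_coord_meas)

lemma gk_meas: fixes Q :: "real^'s::finite^'s"
  assumes "finite Y" "Y \<subseteq> tree_V d" "A \<in> sets (Omega d)"
  shows "(\<lambda>\<omega>. gibbs_kernel d Q Y \<omega> A) \<in> borel_measurable (Omega d)"
  unfolding gibbs_kernel_def
proof (intro borel_measurable_divide borel_measurable_sum borel_measurable_times bw_meas)
  fix \<sigma> assume s: "\<sigma> \<in> PiE Y (\<lambda>_. UNIV::'s set)"
  show "(\<lambda>\<omega>. indicator A (conf_merge Y \<sigma> \<omega>) :: real) \<in> borel_measurable (Omega d)"
    using measurable_compose[OF merge_meas[OF assms(1,2) s] borel_measurable_indicator[OF assms(3)]]
    by (simp add: o_def)
qed

lemma fsat_ex: fixes f :: "'a set \<Rightarrow> real" assumes H: "\<forall>n::nat. \<exists>X\<in>{X. finite X \<and> X \<subseteq> I}. \<forall>Y\<in>{Y. finite Y \<and> Y \<subseteq> I}. X \<subseteq> Y \<longrightarrow> dist (f Y) c < 1 / Suc n"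
 shows "\<exists>X. finite X \<and> X \<subseteq> I \<and> (\<forall>Y. finite Y \<longrightarrow> Y \<subseteq> I \<longrightarrow> X \<subseteq> Y \<longrightarrow> dist (f Y) c < 1 / Suc n)"
proof -
  obtain X where X1: "X \<in> {X. finite X \<and> X \<subseteq> I}" and X2: "\<forall>Y\<in>{Y. finite Y \<and> Y \<subseteq> I}. X \<subseteq> Y \<longrightarrow> dist (f Y) c < 1 / Suc n"
    using H[THEN spec[of _ n]] by (rule bexE)
  show ?thesis by (rule exI[of _ X]) (use X1 X2 in auto)
qed

lemma tendsto_fsat_iff:
  fixes f :: "'a set \<Rightarrow> real"
  shows "(f \<longlongrightarrow> c) (finite_subsets_at_top I) \<longleftrightarrow>
    (\<forall>n::nat. \<exists>X\<in>{X. finite X \<and> X \<subseteq> I}. \<forall>Y\<in>{Y. finite Y \<and> Y \<subseteq> I}. X \<subseteq> Y \<longrightarrow> dist (f Y) c < 1 / Suc n)"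
proof
  assume "(f \<longlongrightarrow> c) (finite_subsets_at_top I)"
  then have E: "\<And>e. e > 0 \<Longrightarrow> eventually (\<lambda>Y. dist (f Y) c < e) (finite_subsets_at_top I)"
    by (simp add: tendsto_iff)
  show "\<forall>n::nat. \<exists>X\<in>{X. finite X \<and> X \<subseteq> I}. \<forall>Y\<in>{Y. finite Y \<and> Y \<subseteq> I}. X \<subseteq> Y \<longrightarrow> dist (f Y) c < 1 / Suc n"
  proof
    fix n :: nat
    have "(0::real) < 1 / Suc n" by simp
    then have "eventually (\<lambda>Y. dist (f Y) c < 1 / Suc n) (finite_subsets_at_top I)" by (rule E)
    then obtain X where X: "finite X" "X \<subseteq> I" "\<forall>Y. finite Y \<and> X \<subseteq> Y \<and> Y \<subseteq> I \<longrightarrow> dist (f Y) c < 1 / Suc n"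
      unfolding eventually_finite_subsets_at_top by (elim exE conjE) 
    show "\<exists>X\<in>{X. finite X \<and> X \<subseteq> I}. \<forall>Y\<in>{Y. finite Y \<and> Y \<subseteq> I}. X \<subseteq> Y \<longrightarrow> dist (f Y) c < 1 / Suc n"
    proof (rule bexI[of _ X])
      show "X \<in> {X. finite X \<and> X \<subseteq> I}" using X by simp
      show "\<forall>Y\<in>{Y. finite Y \<and> Y \<subseteq> I}. X \<subseteq> Y \<longrightarrow> dist (f Y) c < 1 / Suc n"
        using X(3) by auto
    qed
  qed
next
  assume H: "\<forall>n::nat. \<exists>X\<in>{X. finite X \<and> X \<subseteq> I}. \<forall>Y\<in>{Y. finite Y \<and> Y \<subseteq> I}. X \<subseteq> Y \<longrightarrow> dist (f Y) c < 1 / Suc n"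
  show "(f \<longlongrightarrow> c) (finite_subsets_at_top I)"
    unfolding tendsto_iff eventually_finite_subsets_at_top
  proof (intro allI impI)
    fix e :: real assume "0 < e"
    then obtain n :: nat where n: "1 / Suc n < e"
      by (rule nat_approx_posE)
    obtain X where X: "finite X" "X \<subseteq> I" "\<forall>Y. finite Y \<longrightarrow> Y \<subseteq> I \<longrightarrow> X \<subseteq> Y \<longrightarrow> dist (f Y) c < 1 / Suc n"
      using fsat_ex[OF H, of n] by (elim exE conjE)
    have "\<forall>Y. finite Y \<and> X \<subseteq> Y \<and> Y \<subseteq> I \<longrightarrow> dist (f Y) c < e"
    proof (intro allI impI)
      fix Y assume Y: "finite Y \<and> X \<subseteq> Y \<and> Y \<subseteq> I"
      have "dist (f Y) c < 1 / Suc n" using Y X(3) by simp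
      then show "dist (f Y) c < e" using n by linarith
    qed
    then show "\<exists>X. finite X \<and> X \<subseteq> I \<and> (\<forall>Y. finite Y \<and> X \<subseteq> Y \<and> Y \<subseteq> I \<longrightarrow> dist (f Y) c < e)"
      using X(1,2) by (intro exI[of _ X]) simp
  qed
qed

definition cyl_idx :: "nat \<Rightarrow> (nat list set \<times> (nat list \<Rightarrow> 's) set) set" where
  "cyl_idx d = Sigma {\<Delta>. finite \<Delta> \<and> \<Delta> \<subseteq> tree_V d} (\<lambda>\<Delta>. Pow (PiE \<Delta> (\<lambda>_. UNIV)))"

lemma cyl_idx_countable: "countable (cyl_idx d :: (nat list set \<times> (nat list \<Rightarrow> 's::finite) set) set)"
  unfolding cyl_idx_def
proof (rule countable_SIGMA)
  show "countable {\<Delta>::nat list set. finite \<Delta> \<and> \<Delta> \<subseteq> tree_V d}"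
    by (rule countable_subset[OF _ countable_Collect_finite]) auto
  fix \<Delta> :: "nat list set" assume "\<Delta> \<in> {\<Delta>. finite \<Delta> \<and> \<Delta> \<subseteq> tree_V d}"
  then have "finite (PiE \<Delta> (\<lambda>_. UNIV :: 's set))" by (intro finite_PiE) auto
  then show "countable (Pow (PiE \<Delta> (\<lambda>_. UNIV :: 's set)))" by (intro countable_finite) simp
qed

definition cylf :: "nat \<Rightarrow> nat list set \<times> (nat list \<Rightarrow> 's) set \<Rightarrow> (nat list \<Rightarrow> 's) set" where
  "cylf d p = {\<omega> \<in> space (Omega d). restrict \<omega> (fst p) \<in> snd p}"

lemma cyl_eq: "cylinder_events d = cylf d ` (cyl_idx d :: (nat list set \<times> (nat list \<Rightarrow> 's::finite) set) set)"
proof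
  show "cylinder_events d \<subseteq> cylf d ` cyl_idx d"
  proof
    fix A assume "A \<in> cylinder_events d"
    then obtain \<Delta> B where A: "A = {\<omega> \<in> space (Omega d). restrict \<omega> \<Delta> \<in> B}" "finite \<Delta>" "\<Delta> \<subseteq> tree_V d"
      unfolding cylinder_events_def by blast
    have "A = cylf d (\<Delta>, B \<inter> PiE \<Delta> (\<lambda>_. UNIV))"
      unfolding A cylf_def by auto
    moreover have "(\<Delta>, B \<inter> PiE \<Delta> (\<lambda>_. UNIV)) \<in> cyl_idx d" using A by (auto simp: cyl_idx_def)
    ultimately show "A \<in> cylf d ` cyl_idx d"
      by (rule image_eqI)
  qed
  show "cylf d ` cyl_idx d \<subseteq> cylinder_events d"
  proof
    fix A assume "A \<in> cylf d ` cyl_idx d"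
    then obtain \<Delta> B where p: "(\<Delta>, B) \<in> cyl_idx d" and A: "A = cylf d (\<Delta>, B)" by auto
    have "finite \<Delta>" "\<Delta> \<subseteq> tree_V d" using p by (auto simp: cyl_idx_def)
    then show "A \<in> cylinder_events d" unfolding A cylf_def cylinder_events_def by auto
  qed
qed

lemma cyl_countable: "countable (cylinder_events d :: (nat list \<Rightarrow> 's::finite) set set)"
  unfolding cyl_eq by (intro countable_image cyl_idx_countable)

lemma coord_eq_pred: "{\<omega> \<in> space (Omega d). \<omega> v = a} \<in> sets (Omega d)"
proof -
  have "(\<lambda>\<omega>. \<omega> v) -` {a} \<inter> space (Omega d) \<in> sets (Omega d)"
    using coord_meas[of v d] by (rule measurable_sets) simp
  moreover have "(\<lambda>\<omega>. \<omega> v) -` {a} \<inter> space (Omega d) = {\<omega> \<in> space (Omega d). \<omega> v = a}" by auto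
  ultimately show ?thesis by simp
qed

lemma cyl_sets: fixes A :: "(nat list \<Rightarrow> 's::finite) set" assumes "A \<in> cylinder_events d" shows "A \<in> sets (Omega d)"
proof -
  obtain \<Delta> B where A: "A = {\<omega> \<in> space (Omega d). restrict \<omega> \<Delta> \<in> B}" "finite \<Delta>" "\<Delta> \<subseteq> tree_V d"
    using assms unfolding cylinder_events_def by blast
  define B' where "B' = B \<inter> PiE \<Delta> (\<lambda>_. UNIV::'s set)"
  have fB: "finite B'" unfolding B'_def using A(2) by (intro finite_subset[OF Int_lower2] finite_PiE) auto
  have "A = (\<Union>x\<in>B'. \<Inter>v\<in>\<Delta>. {\<omega> \<in> space (Omega d). \<omega> v = x v}) \<inter> space (Omega d)"
  proof (intro set_eqI iffI)
    fix \<omega> assume "\<omega> \<in> A"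
    then show "\<omega> \<in> (\<Union>x\<in>B'. \<Inter>v\<in>\<Delta>. {\<omega> \<in> space (Omega d). \<omega> v = x v}) \<inter> space (Omega d)"
      unfolding A B'_def by (intro IntI UN_I[of "restrict \<omega> \<Delta>"]) auto
  next
    fix \<omega> assume "\<omega> \<in> (\<Union>x\<in>B'. \<Inter>v\<in>\<Delta>. {\<omega> \<in> space (Omega d). \<omega> v = x v}) \<inter> space (Omega d)"
    then obtain x where x: "x \<in> B'" "\<forall>v\<in>\<Delta>. \<omega> v = x v" "\<omega> \<in> space (Omega d)" by blast
    then have "restrict \<omega> \<Delta> = x" unfolding B'_def by (auto simp: PiE_def extensional_def)
    then show "\<omega> \<in> A" using x unfolding A B'_def by auto
  qed
  also have "\<dots> = (\<Union>x\<in>B'. space (Omega d) \<inter> (\<Inter>v\<in>\<Delta>. {\<omega> \<in> space (Omega d). \<omega> v = x v}))" by blast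
  also have "\<dots> \<in> sets (Omega d)"
  proof (intro sets.finite_UN fB ballI)
    fix x assume "x \<in> B'"
    show "space (Omega d) \<inter> (\<Inter>v\<in>\<Delta>. {\<omega> \<in> space (Omega d). \<omega> v = x v}) \<in> sets (Omega d)"
    proof (cases "\<Delta> = {}")
      case True then show ?thesis by simp
    next
      case False then show ?thesis
        using A(2) by (intro sets.Int sets.top sets.finite_INT coord_eq_pred) auto
    qed
  qed
  finally show ?thesis .
qed

lemma limit_unique:
  fixes \<nu>1 \<nu>2 :: "(nat list \<Rightarrow> 's::finite) measure"
  assumes 1: "is_limit_state d Q \<omega> \<nu>1" and 2: "is_limit_state d Q \<omega> \<nu>2"
  shows "\<nu>1 = \<nu>2"
proof -
  have s1: "sets \<nu>1 = sets (Omega d)" and p1: "prob_space \<nu>1" and s2: "sets \<nu>2 = sets (Omega d)" and p2: "prob_space \<nu>2"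
    using 1 2 unfolding is_limit_state_def by auto
  have eqc: "measure \<nu>1 A = measure \<nu>2 A" if "A \<in> cylinder_events d" for A
    using 1 2 that unfolding is_limit_state_def
    by (meson finite_subsets_at_top_neq_bot tendsto_unique)
  show ?thesis
  proof (rule measure_eqI_PiM_infinite[where I="tree_V d" and M="\<lambda>_. count_space UNIV"])
    show "sets \<nu>1 = sets (PiM (tree_V d) (\<lambda>_. count_space (UNIV::'s set)))" using s1 by (simp add: Omega_def)
    show "sets \<nu>2 = sets (PiM (tree_V d) (\<lambda>_. count_space (UNIV::'s set)))" using s2 by (simp add: Omega_def)
    show "finite_measure \<nu>1" using p1 by (simp add: prob_space_def)
    fix A J assume J: "finite J" "J \<subseteq> tree_V d"
    have "prod_emb (tree_V d) (\<lambda>_. count_space (UNIV::'s set)) J (PiE J A) = {\<omega> \<in> space (Omega d). restrict \<omega> J \<in> PiE J A}"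
      by (auto simp: prod_emb_def Omega_def space_PiM)
    also have "\<dots> \<in> cylinder_events d" unfolding cylinder_events_def using J by blast
    finally have c: "prod_emb (tree_V d) (\<lambda>_. count_space (UNIV::'s set)) J (PiE J A) \<in> cylinder_events d" .
    show "emeasure \<nu>1 (prod_emb (tree_V d) (\<lambda>_. count_space (UNIV::'s set)) J (PiE J A)) = emeasure \<nu>2 (prod_emb (tree_V d) (\<lambda>_. count_space (UNIV::'s set)) J (PiE J A))"
      using eqc[OF c] p1 p2 by (simp add: prob_space_def finite_measure.emeasure_eq_measure)
  qed
qed

lemma limit_set_meas:
  fixes Q :: "real^'s::finite^'s"
  shows "{\<omega> \<in> space (Omega d). is_limit_state d Q \<omega> \<nu>} \<in> sets (Omega d)"
proof (cases "sets \<nu> = sets (Omega d) \<and> prob_space \<nu>")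
  case False
  then have "{\<omega> \<in> space (Omega d). is_limit_state d Q \<omega> \<nu>} = {}" unfolding is_limit_state_def by blast
  then show ?thesis by (metis sets.empty_sets)
next
  case True
  let ?FS = "{X. finite X \<and> X \<subseteq> tree_V d}"
  have "{\<omega> \<in> space (Omega d). is_limit_state d Q \<omega> \<nu>} =
    {\<omega> \<in> space (Omega d). \<forall>A\<in>cylinder_events d. \<forall>n::nat. \<exists>X\<in>?FS. \<forall>Y\<in>?FS. X \<subseteq> Y \<longrightarrow>
        dist (gibbs_kernel d Q Y \<omega> A) (measure \<nu> A) < 1 / Suc n}"
    using True unfolding is_limit_state_def tendsto_fsat_iff by simp
  also have "\<dots> \<in> sets (Omega d)"
  proof -
    have cFS: "countable ?FS" by (rule countable_subset[OF _ countable_Collect_finite]) auto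
    have cC: "countable (cylinder_events d :: (nat list \<Rightarrow> 's) set set)" by (rule cyl_countable)
    show ?thesis
    proof (intro sets.sets_Collect_countable_All'[OF _ cC] sets.sets_Collect_countable_All
        sets.sets_Collect_countable_Ex'[OF _ cFS] sets.sets_Collect_countable_All'[OF _ cFS]
        sets.sets_Collect_imp sets.sets_Collect_const)
      fix A :: "(nat list \<Rightarrow> 's) set" and n :: nat and Y assume A: "A \<in> cylinder_events d" and Y: "Y \<in> ?FS"
      have "(\<lambda>\<omega>. gibbs_kernel d Q Y \<omega> A) \<in> borel_measurable (Omega d)"
        using Y cyl_sets[OF A] by (intro gk_meas) auto
      then have "Measurable.pred (Omega d) (\<lambda>\<omega>. dist (gibbs_kernel d Q Y \<omega> A) (measure \<nu> A) < 1 / Suc n)"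
        by measurable
      then show "{\<omega> \<in> space (Omega d). dist (gibbs_kernel d Q Y \<omega> A) (measure \<nu> A) < 1 / Suc n} \<in> sets (Omega d)"
        by (simp add: pred_def)
    qed
  qed
  finally show ?thesis .
qed

lemma eta0_space: "(\<lambda>v\<in>tree_V d. undefined) \<in> space (Omega d)"
  by (simp add: space_Omega)

lemma default_props: "sets (default_state d) = sets (Omega d) \<and> prob_space (default_state d)"
  unfolding default_state_def using prob_space_return[OF eta0_space[of d]] by simp

lemma pi_props: "sets (pi_state d Q \<omega>) = sets (Omega d) \<and> prob_space (pi_state d Q \<omega>)"
proof (cases "\<exists>\<nu>. is_limit_state d Q \<omega> \<nu>")
  case True
  then have L: "is_limit_state d Q \<omega> (SOME \<nu>. is_limit_state d Q \<omega> \<nu>)" by (rule someI_ex)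
  have "pi_state d Q \<omega> = (SOME \<nu>. is_limit_state d Q \<omega> \<nu>)" using True unfolding pi_state_def by simp
  then show ?thesis using L unfolding is_limit_state_def by simp
next
  case False
  have "pi_state d Q \<omega> = default_state d" unfolding pi_state_def by (rule if_not_P[OF False])
  then show ?thesis using default_props[of d] by simp
qed

lemma not_ms_self:
  assumes "sets \<nu> = sets (Omega d)" "prob_space \<nu>"
  shows "\<not> mutually_singular d \<nu> \<nu>"
proof
  assume "mutually_singular d \<nu> \<nu>"
  then obtain A where A: "A \<in> sets (Omega d)" "measure \<nu> A = 0" "measure \<nu> (space (Omega d) - A) = 0"
    unfolding mutually_singular_def by blast
  have sp: "space \<nu> = space (Omega d)" using assms(1) by (rule sets_eq_imp_space_eq)
  interpret prob_space \<nu> by fact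
  have "prob (space \<nu> - A) = 1 - prob A" using A(1) assms(1) by (intro prob_compl) auto
  then show False using A sp by simp
qed

lemma E_eq:
  assumes "\<nu> \<noteq> default_state d"
  shows "{\<omega> \<in> space (Omega d). pi_state d Q \<omega> = \<nu>} = {\<omega> \<in> space (Omega d). is_limit_state d Q \<omega> \<nu>}"
proof (intro Collect_cong conj_cong refl)
  fix \<omega>
  show "pi_state d Q \<omega> = \<nu> \<longleftrightarrow> is_limit_state d Q \<omega> \<nu>"
  proof (cases "\<exists>\<nu>. is_limit_state d Q \<omega> \<nu>")
    case True
    then have L: "is_limit_state d Q \<omega> (SOME \<nu>. is_limit_state d Q \<omega> \<nu>)" by (rule someI_ex)
    have P: "pi_state d Q \<omega> = (SOME \<nu>. is_limit_state d Q \<omega> \<nu>)" using True unfolding pi_state_def by simp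
    show ?thesis
    proof
      assume "pi_state d Q \<omega> = \<nu>" then show "is_limit_state d Q \<omega> \<nu>" using L P by simp
    next
      assume "is_limit_state d Q \<omega> \<nu>" then show "pi_state d Q \<omega> = \<nu>" using limit_unique[OF L] P by simp
    qed
  next
    case False
    have "pi_state d Q \<omega> = default_state d" unfolding pi_state_def by (rule if_not_P[OF False])
    then show ?thesis using assms False by auto
  qed
qed

lemma eta0_space': "(\<lambda>v\<in>tree_V d. undefined) \<in> space (Omega d)"
  by (simp add: space_Omega)

lemma default_not_gibbs:
  fixes Q :: "real^'s::finite^'s"
  assumes pos: "\<forall>i j. 0 < Q $ i $ j" and card: "2 \<le> CARD('s)"
  shows "default_state d \<notin> gibbs_measures d Q"
proof
  assume G: "default_state d \<in> gibbs_measures d Q"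
  define \<eta> :: "nat list \<Rightarrow> 's" where "\<eta> = (\<lambda>v\<in>tree_V d. undefined)"
  have \<eta>: "\<eta> \<in> space (Omega d)" unfolding \<eta>_def by (rule eta0_space')
  have rV: "[] \<in> tree_V d" by (simp add: tree_V_def)
  define A where "A = {\<omega> \<in> space (Omega d). \<omega> [] = \<eta> []}"
  have A: "A \<in> sets (Omega d)" unfolding A_def by (rule coord_eq_pred)
  have "\<eta> \<in> A" using \<eta> unfolding A_def by simp
  then have m1: "measure (default_state d) A = 1"
    unfolding default_state_def \<eta>_def[symmetric] using A by (simp add: measure_return)
  have m2: "measure (default_state d) A = (\<integral>\<omega>. gibbs_kernel d Q {[]} \<omega> A \<partial>default_state d)"
    using G A rV unfolding gibbs_measures_def by auto
  have m3: "(\<integral>\<omega>. gibbs_kernel d Q {[]} \<omega> A \<partial>default_state d) = gibbs_kernel d Q {[]} \<eta> A"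
    unfolding default_state_def \<eta>_def[symmetric]
    using \<eta> by (intro integral_return gk_meas A) (auto simp: rV)
  have "gibbs_kernel d Q {[]} \<eta> A < 1"
  proof -
    let ?S = "PiE {[]::nat list} (\<lambda>_. UNIV::'s set)"
    let ?w = "\<lambda>\<sigma>. boltz_weight d Q {[]} (conf_merge {[]} \<sigma> \<eta>)"
    let ?i = "\<lambda>\<sigma>. indicator A (conf_merge {[]} \<sigma> \<eta>) :: real"
    have fS: "finite ?S" by (intro finite_PiE) auto
    have wpos: "0 < ?w \<sigma>" for \<sigma> unfolding boltz_weight_def using pos by (intro prod_pos) auto
    have "\<exists>s1::'s. s1 \<noteq> \<eta> []"
    proof (rule ccontr)
      assume "\<not> (\<exists>s1::'s. s1 \<noteq> \<eta> [])"
      then have "(UNIV::'s set) = {\<eta> []}" by auto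
      then have "CARD('s) = 1" by (metis card.empty card_insert_disjoint empty_iff finite.emptyI One_nat_def)
      with card show False by simp
    qed
    then obtain s1 :: 's where s1: "s1 \<noteq> \<eta> []" by (elim exE)
    define \<sigma>1 where "\<sigma>1 = (\<lambda>v\<in>{[]::nat list}. s1)"
    have \<sigma>1: "\<sigma>1 \<in> ?S" unfolding \<sigma>1_def by simp
    have "conf_merge {[]} \<sigma>1 \<eta> [] = s1" unfolding \<sigma>1_def conf_merge_def by simp
    then have i1: "?i \<sigma>1 = 0" unfolding A_def using s1 by (simp add: indicator_def)
    have "(\<Sum>\<sigma>\<in>?S. ?w \<sigma> * ?i \<sigma>) < (\<Sum>\<sigma>\<in>?S. ?w \<sigma>)"
    proof (rule sum_strict_mono_ex1[OF fS])
      show "\<forall>\<sigma>\<in>?S. ?w \<sigma> * ?i \<sigma> \<le> ?w \<sigma>"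
        using wpos by (simp add: indicator_def less_imp_le)
      show "\<exists>\<sigma>\<in>?S. ?w \<sigma> * ?i \<sigma> < ?w \<sigma>" using \<sigma>1 i1 wpos[of \<sigma>1] by (intro bexI[of _ \<sigma>1]) simp_all
    qed
    moreover have "0 < (\<Sum>\<sigma>\<in>?S. ?w \<sigma>)" using \<sigma>1 fS wpos by (intro sum_pos) auto
    ultimately show ?thesis unfolding gibbs_kernel_def by simp
  qed
  then show False using m1 m2 m3 by simp
qed

theorem corollary3p5:
  fixes d :: nat and u :: "'s::finite \<Rightarrow> 's \<Rightarrow> real" and \<Psi> :: "'s \<Rightarrow> real"
    and idx :: "'s \<Rightarrow> nat" and g :: "nat \<Rightarrow> real" and Q0 :: "real^'s^'s"
    and xbar :: "real^'s^'s \<Rightarrow> real^'s" and N :: "(real^'s^'s) set"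
    and \<beta> \<beta>0 :: real and p10 :: "real \<Rightarrow> real" and \<mu> :: "(nat list \<Rightarrow> 's) measure"
  assumes "model_class d u \<Psi>"
    and "circulant_base d idx g Q0"
    and "central_branch d Q0 xbar N"
    and "0 < \<beta>0"
    and "\<forall>\<beta>'>\<beta>0. 0 < p10 \<beta>'"
    and "\<forall>\<beta>' \<mu>'. \<beta>0 < \<beta>' \<longrightarrow> central_state d xbar N (transfer \<beta>' u \<Psi> d) \<mu>' \<longrightarrow> p1 \<mu>' < p10 \<beta>' \<longrightarrow>
           measure (pair_measure \<mu>' \<mu>')
             {(\<omega>, \<omega>') \<in> space (Omega d) \<times> space (Omega d).
                mutually_singular d (pi_state d (transfer \<beta>' u \<Psi> d) \<omega>) (pi_state d (transfer \<beta>' u \<Psi> d) \<omega>')} = 1"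
    and "\<beta>0 < \<beta>"
    and "central_state d xbar N (transfer \<beta> u \<Psi> d) \<mu>"
    and "p1 \<mu> < p10 \<beta>"
  shows "(\<forall>\<nu>\<in>extremal_gibbs d (transfer \<beta> u \<Psi> d).
            {\<omega> \<in> space (Omega d). pi_state d (transfer \<beta> u \<Psi> d) \<omega> = \<nu>} \<in> sets (Omega d) \<and>
            measure \<mu> {\<omega> \<in> space (Omega d). pi_state d (transfer \<beta> u \<Psi> d) \<omega> = \<nu>} = 0)
       \<and> (\<forall>C. countable C \<longrightarrow>
            measure \<mu> {\<omega> \<in> space (Omega d). pi_state d (transfer \<beta> u \<Psi> d) \<omega> \<in> C} < 1)"
proof -
  define Q where "Q = transfer \<beta> u \<Psi> d"
  define pi where "pi = pi_state d Q"
  define S where "S = {(\<omega>, \<omega>') \<in> space (Omega d) \<times> space (Omega d). mutually_singular d (pi \<omega>) (pi \<omega>')}"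
  have G: "\<mu> \<in> gibbs_measures d Q" using assms(8) unfolding central_state_def Q_def by simp
  then have sm: "sets \<mu> = sets (Omega d)" and pm: "prob_space \<mu>" unfolding gibbs_measures_def by auto
  have sp: "space \<mu> = space (Omega d)" using sm by (rule sets_eq_imp_space_eq)
  interpret prob_space \<mu> by fact
  interpret PP: pair_prob_space \<mu> \<mu> by unfold_locales
  have m1: "measure (\<mu> \<Otimes>\<^sub>M \<mu>) S = 1"
    unfolding S_def pi_def Q_def by (rule assms(6)[rule_format, OF assms(7) assms(8) assms(9)])
  have Ssets: "S \<in> sets (\<mu> \<Otimes>\<^sub>M \<mu>)"
  proof (rule ccontr)
    assume "S \<notin> sets (\<mu> \<Otimes>\<^sub>M \<mu>)"
    then have "measure (\<mu> \<Otimes>\<^sub>M \<mu>) S = 0" by (rule measure_notin_sets)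
    then show False using m1 by simp
  qed
  have "AE x in \<mu> \<Otimes>\<^sub>M \<mu>. x \<in> S" using PP.AE_in_set_eq_1[OF Ssets] m1 by simp
  then have "AE \<omega> in \<mu>. AE \<omega>' in \<mu>. (\<omega>, \<omega>') \<in> S" by (rule PP.AE_pair)
  then have ae2: "AE \<omega> in \<mu>. AE \<omega>' in \<mu>. pi \<omega>' \<noteq> pi \<omega>"
  proof (rule AE_mp[OF _ AE_I2[OF impI]])
    fix \<omega> assume "\<omega> \<in> space \<mu>" and H: "AE \<omega>' in \<mu>. (\<omega>, \<omega>') \<in> S"
    show "AE \<omega>' in \<mu>. pi \<omega>' \<noteq> pi \<omega>"
      using H
    proof (rule AE_mp[OF _ AE_I2[OF impI]])
      fix \<omega>' assume "(\<omega>, \<omega>') \<in> S"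
      then have "mutually_singular d (pi \<omega>) (pi \<omega>')" unfolding S_def by auto
      moreover have "\<not> mutually_singular d (pi \<omega>) (pi \<omega>)"
        using pi_props[of d Q \<omega>] unfolding pi_def by (intro not_ms_self) auto
      ultimately show "pi \<omega>' \<noteq> pi \<omega>" by auto
    qed
  qed
  have key: "AE \<omega> in \<mu>. pi \<omega> \<noteq> \<nu>" for \<nu>
  proof (cases "\<exists>\<omega>0. (AE \<omega>' in \<mu>. pi \<omega>' \<noteq> pi \<omega>0) \<and> pi \<omega>0 = \<nu>")
    case True
    then obtain \<omega>0 where "AE \<omega>' in \<mu>. pi \<omega>' \<noteq> pi \<omega>0" "pi \<omega>0 = \<nu>" by (elim exE conjE)
    then show ?thesis by simp
  next
    case False
    show ?thesis using ae2
    proof (rule AE_mp[OF _ AE_I2[OF impI]])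
      fix \<omega> assume "AE \<omega>' in \<mu>. pi \<omega>' \<noteq> pi \<omega>"
      then show "pi \<omega> \<noteq> \<nu>" using False by blast
    qed
  qed
  have card: "2 \<le> CARD('s)" using assms(1) unfolding model_class_def by simp
  have pos: "\<forall>i j. 0 < Q $ i $ j" unfolding Q_def transfer_def by simp
  have part1: "{\<omega> \<in> space (Omega d). pi \<omega> = \<nu>} \<in> sets (Omega d) \<and> measure \<mu> {\<omega> \<in> space (Omega d). pi \<omega> = \<nu>} = 0"
    if "\<nu> \<in> extremal_gibbs d Q" for \<nu>
  proof -
    have "\<nu> \<in> gibbs_measures d Q" using that unfolding extremal_gibbs_def by simp
    then have "\<nu> \<noteq> default_state d" using default_not_gibbs[OF pos card] by auto
    have ms: "{\<omega> \<in> space (Omega d). pi \<omega> = \<nu>} \<in> sets (Omega d)"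
      unfolding pi_def E_eq[OF \<open>\<nu> \<noteq> default_state d\<close>] by (rule limit_set_meas)
    have "AE \<omega> in \<mu>. \<omega> \<notin> {\<omega> \<in> space (Omega d). pi \<omega> = \<nu>}" using key[of \<nu>] by (rule AE_mp) auto
    then show ?thesis using ms prob_eq_0[of "{\<omega> \<in> space (Omega d). pi \<omega> = \<nu>}"] sm by auto
  qed
  have part2: "measure \<mu> {\<omega> \<in> space (Omega d). pi \<omega> \<in> C} < 1" if "countable C" for C
  proof -
    have "AE \<omega> in \<mu>. \<forall>\<nu>\<in>C. pi \<omega> \<noteq> \<nu>" using key that by (intro AE_ball_countable') auto
    then have ae: "AE \<omega> in \<mu>. \<omega> \<notin> {\<omega> \<in> space (Omega d). pi \<omega> \<in> C}" by (rule AE_mp) auto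
    have "measure \<mu> {\<omega> \<in> space (Omega d). pi \<omega> \<in> C} = 0"
    proof (cases "{\<omega> \<in> space (Omega d). pi \<omega> \<in> C} \<in> sets \<mu>")
      case True then show ?thesis using ae prob_eq_0 by auto
    next
      case False then show ?thesis by (simp add: measure_notin_sets)
    qed
    then show ?thesis by simp
  qed
  show ?thesis
  proof (intro conjI ballI allI impI)
    fix \<nu> assume "\<nu> \<in> extremal_gibbs d (transfer \<beta> u \<Psi> d)"
    then show "{\<omega> \<in> space (Omega d). pi_state d (transfer \<beta> u \<Psi> d) \<omega> = \<nu>} \<in> sets (Omega d)"
      "measure \<mu> {\<omega> \<in> space (Omega d). pi_state d (transfer \<beta> u \<Psi> d) \<omega> = \<nu>} = 0"
      using part1[of \<nu>] unfolding pi_def Q_def by auto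
  next
    fix C :: "(nat list \<Rightarrow> 's) measure set" assume "countable C"
    then show "measure \<mu> {\<omega> \<in> space (Omega d). pi_state d (transfer \<beta> u \<Psi> d) \<omega> \<in> C} < 1"
      using part2[of C] unfolding pi_def Q_def by simp
  qed
qed

end
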